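(* Let $0<\alpha<1$ and $0<\gamma<1$, and for integers $t\ge1$ define $$S(t)\triangleq\sum_{i=1}^{t-1}\frac{(1-\gamma)\,\alpha^{t-i}}{1-\gamma^{i+1}}$$ (so $S(1)=0$). Let $t_0=\left\lceil \ln\!\left(\frac{1-\alpha}{1+\alpha-2\gamma\alpha}\right)\Big/\ln(\gamma)\right\rceil$ and $A_\gamma=\max\left\{\frac{(1-\gamma^{t_0})S(t_0)}{1-\gamma},\ \frac{2\alpha}{1-\alpha}\right\}$. Then for all integers $t\ge t_0$, $$S(t)\le\frac{A_\gamma(1-\gamma)}{1-\gamma^t}.$$ Furthermore, $$\lim_{t\to\infty}S(t)=\frac{(1-\gamma)\alpha}{1-\alpha}.$$
   Context: In the paper, $\alpha=(1-\eta\mu)^E$ is the contraction factor of $E$ gradient-descent steps with step size $\eta\in(0,\frac{2}{\mu+L}]$ on a $\mu$-strongly convex, $L$-smooth function, and $\gamma$ is a discount factor. *)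

theory Defs
  imports "HOL-Analysis.Analysis"
begin

definition S_seq :: "real \<Rightarrow> real \<Rightarrow> nat \<Rightarrow> real" where
  "S_seq \<alpha> \<gamma> t = (\<Sum>i=1..<t. (1 - \<gamma>) * \<alpha> ^ (t - i) / (1 - \<gamma> ^ (i + 1)))"

definition t0_of :: "real \<Rightarrow> real \<Rightarrow> nat" where
  "t0_of \<alpha> \<gamma> = nat \<lceil>ln ((1 - \<alpha>) / (1 + \<alpha> - 2 * \<gamma> * \<alpha>)) / ln \<gamma>\<rceil>"

definition A_gamma :: "real \<Rightarrow> real \<Rightarrow> real" where
  "A_gamma \<alpha> \<gamma> = max ((1 - \<gamma> ^ t0_of \<alpha> \<gamma>) * S_seq \<alpha> \<gamma> (t0_of \<alpha> \<gamma>) / (1 - \<gamma>))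
                        (2 * \<alpha> / (1 - \<alpha>))"

end

theory Submission
  imports Defs
begin

lemma S_rec:
  assumes "t \<ge> 1"
  shows "S_seq a g (Suc t) = a * S_seq a g t + (1 - g) * a / (1 - g ^ (t + 1))"
proof -
  have "S_seq a g (Suc t) = (\<Sum>i=1..<t. (1 - g) * a ^ (Suc t - i) / (1 - g ^ (i + 1)))
      + (1 - g) * a / (1 - g ^ (t + 1))"
    unfolding S_seq_def using assms by (simp add: sum.atLeastLessThan_Suc)
  also have "(\<Sum>i=1..<t. (1 - g) * a ^ (Suc t - i) / (1 - g ^ (i + 1)))
      = (\<Sum>i=1..<t. a * ((1 - g) * a ^ (t - i) / (1 - g ^ (i + 1))))"
  proof (rule sum.cong)
    fix i assume "i \<in> {1..<t}"
    then have "Suc t - i = Suc (t - i)" by auto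
    then show "(1 - g) * a ^ (Suc t - i) / (1 - g ^ (i + 1)) = a * ((1 - g) * a ^ (t - i) / (1 - g ^ (i + 1)))"
      by simp
  qed simp
  also have "\<dots> = a * S_seq a g t" unfolding S_seq_def by (simp add: sum_distrib_left)
  finally show ?thesis .
qed

lemma aux: "(p::real) \<noteq> 0 \<Longrightarrow> c \<noteq> 0 \<Longrightarrow> s = (p * s / c) * c / p"
  by (simp add: field_simps)

lemma contr_lim:
  fixes d e :: "nat \<Rightarrow> real"
  assumes a: "0 \<le> a" "a < 1"
    and rec: "\<And>n. \<bar>d (Suc n)\<bar> \<le> a * \<bar>d n\<bar> + \<bar>e n\<bar>"
    and e: "e \<longlonglongrightarrow> 0"
  shows "d \<longlonglongrightarrow> 0"
proof (rule LIMSEQ_I)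
  fix r :: real assume r: "0 < r"
  have "r * (1 - a) / 2 > 0" using r a by simp
  then obtain N where N: "\<And>n. n \<ge> N \<Longrightarrow> norm (e n - 0) < r * (1 - a) / 2"
    using LIMSEQ_D[OF e] by blast
  have bound: "\<bar>d (N + k)\<bar> \<le> a ^ k * \<bar>d N\<bar> + r / 2" for k
  proof (induction k)
    case 0 then show ?case using r by simp
  next
    case (Suc k)
    have "\<bar>d (N + Suc k)\<bar> \<le> a * \<bar>d (N + k)\<bar> + \<bar>e (N + k)\<bar>" using rec[of "N + k"] by simp
    also have "\<dots> \<le> a * (a ^ k * \<bar>d N\<bar> + r / 2) + r * (1 - a) / 2"
      using Suc.IH N[of "N + k"] a by (intro add_mono mult_left_mono) auto
    also have "\<dots> = a ^ Suc k * \<bar>d N\<bar> + r / 2" by (simp add: field_simps)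
    finally show ?case .
  qed
  have "(\<lambda>k. a ^ k * \<bar>d N\<bar>) \<longlonglongrightarrow> 0 * \<bar>d N\<bar>"
    by (intro tendsto_mult LIMSEQ_power_zero tendsto_const) (use a in auto)
  then have "(\<lambda>k. a ^ k * \<bar>d N\<bar>) \<longlonglongrightarrow> 0" by simp
  moreover have "r / 2 > 0" using r by simp
  ultimately obtain M where M: "\<And>k. k \<ge> M \<Longrightarrow> norm (a ^ k * \<bar>d N\<bar> - 0) < r / 2"
    using LIMSEQ_D by blast
  show "\<exists>no. \<forall>n\<ge>no. norm (d n - 0) < r"
  proof (intro exI allI impI)
    fix n assume n: "N + M \<le> n"
    then have "n = N + (n - N)" by simp
    then have "\<bar>d n\<bar> \<le> a ^ (n - N) * \<bar>d N\<bar> + r / 2" using bound[of "n - N"] by simp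
    moreover have "a ^ (n - N) * \<bar>d N\<bar> < r / 2" using M[of "n - N"] n a by simp
    ultimately show "norm (d n - 0) < r" by simp
  qed
qed

theorem proposition2:
  fixes \<alpha> \<gamma> :: real
  assumes "0 < \<alpha>" "\<alpha> < 1" "0 < \<gamma>" "\<gamma> < 1"
  shows "(\<forall>t::nat. t \<ge> t0_of \<alpha> \<gamma> \<longrightarrow>
            S_seq \<alpha> \<gamma> t \<le> A_gamma \<alpha> \<gamma> * (1 - \<gamma>) / (1 - \<gamma> ^ t))
       \<and> (S_seq \<alpha> \<gamma> \<longlonglongrightarrow> (1 - \<gamma>) * \<alpha> / (1 - \<alpha>))"
proof
  note ag = assms
  define c where "c = (1 - \<alpha>) / (1 + \<alpha> - 2 * \<gamma> * \<alpha>)"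
  define t0 where "t0 = t0_of \<alpha> \<gamma>"
  define A where "A = A_gamma \<alpha> \<gamma>"
  have den: "1 + \<alpha> - 2 * \<gamma> * \<alpha> > 1 - \<alpha>"
  proof -
    have "\<gamma> * \<alpha> < \<alpha>" using ag by simp
    then show ?thesis by linarith
  qed
  have dp: "1 + \<alpha> - 2 * \<gamma> * \<alpha> > 0" using den ag by linarith
  have c0: "0 < c" using dp ag unfolding c_def by simp
  have c1: "c < 1" using dp den unfolding c_def by (simp add: divide_less_eq)
  have lnc: "ln c < 0" using c0 c1 by simp
  have lng: "ln \<gamma> < 0" using ag by simp
  have q: "ln c / ln \<gamma> > 0" using lnc lng by (simp add: divide_neg_neg)
  have t0ge: "real t0 \<ge> ln c / ln \<gamma>"
    unfolding t0_def t0_of_def c_def[symmetric]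
    by (rule real_nat_ceiling_ge)
  have t0pos: "t0 \<ge> 1" using t0ge q by (cases t0) auto
  have gpow: "\<gamma> ^ t \<le> c" if "t \<ge> t0" for t
  proof -
    have "real t \<ge> ln c / ln \<gamma>" using that t0ge by linarith
    then have "real t * ln \<gamma> \<le> ln c" using lng by (simp add: pos_divide_le_eq neg_divide_le_eq)
    then have "ln (\<gamma> ^ t) \<le> ln c" using ag by (simp add: ln_realpow)
    then show ?thesis using ag c0 by simp
  qed
  have Age: "A \<ge> 2 * \<alpha> / (1 - \<alpha>)" unfolding A_def A_gamma_def by simp
  have Age2: "A \<ge> (1 - \<gamma> ^ t0) * S_seq \<alpha> \<gamma> t0 / (1 - \<gamma>)"
    unfolding A_def A_gamma_def t0_def by simp
  have gt1: "\<gamma> ^ t < 1" if "t \<ge> 1" for t :: nat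
    using ag that by (simp add: power_less_one_iff)
  show "\<forall>t::nat. t \<ge> t0_of \<alpha> \<gamma> \<longrightarrow>
            S_seq \<alpha> \<gamma> t \<le> A_gamma \<alpha> \<gamma> * (1 - \<gamma>) / (1 - \<gamma> ^ t)"
    unfolding t0_def[symmetric] A_def[symmetric]
  proof (intro allI impI)
    fix t assume "t0 \<le> t"
    then show "S_seq \<alpha> \<gamma> t \<le> A * (1 - \<gamma>) / (1 - \<gamma> ^ t)"
    proof (induction t rule: dec_induct)
      case base
      have p: "1 - \<gamma> ^ t0 > 0" using gt1[OF t0pos] by simp
      have "S_seq \<alpha> \<gamma> t0 = ((1 - \<gamma> ^ t0) * S_seq \<alpha> \<gamma> t0 / (1 - \<gamma>)) * (1 - \<gamma>) / (1 - \<gamma> ^ t0)"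
        using p ag aux[of "1 - \<gamma> ^ t0" "1 - \<gamma>" "S_seq \<alpha> \<gamma> t0"] by simp
      also have "\<dots> \<le> A * (1 - \<gamma>) / (1 - \<gamma> ^ t0)"
        using Age2 p ag by (intro divide_right_mono mult_right_mono) auto
      finally show ?case .
    next
      case (step t)
      have t1: "t \<ge> 1" using step t0pos by simp
      define g where "g = \<gamma> ^ t"
      have g0: "0 < g" using ag unfolding g_def by simp
      have gc: "g \<le> c" using gpow step unfolding g_def by simp
      have g1: "g < 1" using gt1[OF t1] unfolding g_def .
      define p where "p = 1 - g"
      define qq where "qq = 1 - \<gamma> * g"
      have p0: "p > 0" using g1 unfolding p_def by simp
      have q0: "qq > 0" using g1 g0 ag mult_strict_mono[of \<gamma> 1 g 1] unfolding qq_def by simp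
      have "g * (1 + \<alpha> - 2 * \<gamma> * \<alpha>) \<le> 1 - \<alpha>"
        using gc den ag unfolding c_def by (simp add: le_divide_eq)
      then have key: "2 * (p - \<alpha> * qq) \<ge> (1 - \<alpha>) * p"
        unfolding p_def qq_def by (simp add: algebra_simps)
      have A0: "A \<ge> 0" using Age ag by (smt (verit) divide_nonneg_pos)
      have "A * (p - \<alpha> * qq) \<ge> (2 * \<alpha> / (1 - \<alpha>)) * ((1 - \<alpha>) * p / 2)"
        using key Age A0 ag p0 by (intro mult_mono) auto
      moreover have "(2 * \<alpha> / (1 - \<alpha>)) * ((1 - \<alpha>) * p / 2) = \<alpha> * p" using ag by simp
      ultimately have k2: "A * (p - \<alpha> * qq) \<ge> \<alpha> * p" by simp
      have rec: "S_seq \<alpha> \<gamma> (Suc t) = \<alpha> * S_seq \<alpha> \<gamma> t + (1 - \<gamma>) * \<alpha> / qq"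
        using S_rec[OF t1] unfolding qq_def g_def by (simp add: algebra_simps)
      have IH: "S_seq \<alpha> \<gamma> t \<le> A * (1 - \<gamma>) / p" using step.IH unfolding p_def g_def .
      have "S_seq \<alpha> \<gamma> (Suc t) \<le> \<alpha> * (A * (1 - \<gamma>) / p) + (1 - \<gamma>) * \<alpha> / qq"
        unfolding rec using mult_left_mono[OF IH, of \<alpha>] ag by simp
      also have "\<dots> = (1 - \<gamma>) * ((\<alpha> * A * qq + \<alpha> * p) / (p * qq))"
        using p0 q0 by (simp add: field_simps)
      also have "\<dots> \<le> (1 - \<gamma>) * ((A * p) / (p * qq))"
        using k2 p0 q0 ag by (intro mult_left_mono divide_right_mono) (auto simp: algebra_simps)
      also have "\<dots> = A * (1 - \<gamma>) / qq" using p0 q0 by (simp add: field_simps)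
      also have "qq = 1 - \<gamma> ^ Suc t" unfolding qq_def g_def by simp
      finally show ?case .
    qed
  qed
next
  note ag = assms
  define L where "L = (1 - \<gamma>) * \<alpha> / (1 - \<alpha>)"
  define d where "d n = S_seq \<alpha> \<gamma> (Suc n) - L" for n
  define e where "e n = (1 - \<gamma>) * \<alpha> * (1 / (1 - \<gamma> ^ (n + 2)) - 1)" for n
  have drec: "d (Suc n) = \<alpha> * d n + e n" for n
  proof -
    have "S_seq \<alpha> \<gamma> (Suc (Suc n)) = \<alpha> * S_seq \<alpha> \<gamma> (Suc n) + (1 - \<gamma>) * \<alpha> / (1 - \<gamma> ^ (n + 2))"
      using S_rec[of "Suc n" \<alpha> \<gamma>] by simp
    moreover have "\<alpha> * L - L = - (1 - \<gamma>) * \<alpha>"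
    proof -
      have "L * (1 - \<alpha>) = (1 - \<gamma>) * \<alpha>" unfolding L_def using ag by simp
      then show ?thesis by (simp add: algebra_simps)
    qed
    ultimately show ?thesis unfolding d_def e_def by (simp add: algebra_simps)
  qed
  have "(\<lambda>n. \<gamma> ^ (n + 2)) \<longlonglongrightarrow> 0"
    using LIMSEQ_power_zero[of \<gamma>] ag LIMSEQ_ignore_initial_segment[of "\<lambda>n. \<gamma> ^ n" 0 2] by simp
  then have "e \<longlonglongrightarrow> (1 - \<gamma>) * \<alpha> * (1 / (1 - 0) - 1)"
    unfolding e_def by (intro tendsto_intros) auto
  then have e0: "e \<longlonglongrightarrow> 0" by simp
  have "d \<longlonglongrightarrow> 0"
    by (rule contr_lim[of \<alpha> _ e]) (use ag e0 drec in \<open>auto intro: order_trans[OF abs_triangle_ineq] simp: abs_mult\<close>)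
  then have "(\<lambda>n. d n + L) \<longlonglongrightarrow> 0 + L" by (intro tendsto_intros)
  then have "(\<lambda>n. S_seq \<alpha> \<gamma> (Suc n)) \<longlonglongrightarrow> L" unfolding d_def by simp
  then show "S_seq \<alpha> \<gamma> \<longlonglongrightarrow> (1 - \<gamma>) * \<alpha> / (1 - \<alpha>)"
    unfolding L_def by (rule LIMSEQ_imp_Suc)
qed

end
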